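(* Let $N\geq3$. The critical point $Q_2=\left(0,-\frac{N-2}{m},0\right)$ of system (S2) is an unstable node if $m<p<\frac{m(N+\sigma)}{N-2}$, and a saddle point if $p>\frac{m(N+\sigma)}{N-2}$, with a two-dimensional unstable manifold contained in the plane $\{z=0\}$ and a one-dimensional stable manifold contained in the plane $\{x=0\}$. For $m<p<\frac{m(N+\sigma)}{N-2}$, the critical point $Q_3=\left(0,-\frac{\sigma+2}{p-m},Z_0\right)$, where $$Z_0=\frac{(\sigma+2)[m(N+\sigma)-p(N-2)]}{(p-m)^2},$$ is a saddle point with a two-dimensional unstable manifold and a one-dimensional stable manifold contained in the plane $\{x=0\}$. Trajectories stemming from $Q_2$, respectively $Q_3$, correspond to profiles with $f(\xi)\sim C\xi^{-(N-2)/m}$, respectively $f(\xi)\sim C\xi^{-(\sigma+2)/(p-m)}$, as $\xi\to0$, for some $C>0$.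
   Context: Let $m>1$, $\sigma>0$, $p>m$, $L=\sigma(m-1)+2(p-1)$, $\alpha=(\sigma+2)/L$, $\beta=(p-m)/L$. Positive profiles $f$ solve $(f^m)''+\frac{N-1}{\xi}(f^m)'+\alpha f+\beta\xi f'-\xi^\sigma f^p=0$. Set $x=\frac{\alpha}{m}\xi^2f^{1-m}$, $y=\xi f'/f$, $z=\frac1m\xi^{\sigma+2}f^{p-m}$, $\eta_1=\ln\xi$. Then $(x,y,z)$ solves the autonomous system (S2): $$\dot x=x(2-(m-1)y),\quad \dot y=-x-(N-2)y+z-my^2-\tfrac{p-m}{\sigma+2}xy,\quad \dot z=z(\sigma+2+(p-m)y).$$ *)

theory Defs
  imports "HOL-Analysis.Analysis" "HOL-Computational_Algebra.Polynomial"
begin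

definition L_par :: "real \<Rightarrow> real \<Rightarrow> real \<Rightarrow> real" where
  "L_par m \<sigma> p = \<sigma> * (m - 1) + 2 * (p - 1)"

definition alpha_par :: "real \<Rightarrow> real \<Rightarrow> real \<Rightarrow> real" where
  "alpha_par m \<sigma> p = (\<sigma> + 2) / L_par m \<sigma> p"

definition beta_par :: "real \<Rightarrow> real \<Rightarrow> real \<Rightarrow> real" where
  "beta_par m \<sigma> p = (p - m) / L_par m \<sigma> p"

definition S2 :: "real \<Rightarrow> nat \<Rightarrow> real \<Rightarrow> real \<Rightarrow> real^3 \<Rightarrow> real^3" where
  "S2 m N \<sigma> p v =
     (let x = v$1; y = v$2; z = v$3 in
      vector [x * (2 - (m - 1) * y),
              - x - (real N - 2) * y + z - m * y^2 - (p - m) / (\<sigma> + 2) * x * y,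
              z * (\<sigma> + 2 + (p - m) * y)])"

definition charpoly :: "real^'n^'n \<Rightarrow> real poly" where
  "charpoly M = det (\<chi> i j. if i = j then [:- (M$i$j), 1:] else [:- (M$i$j):])"

definition ccharpoly :: "real^'n^'n \<Rightarrow> complex poly" where
  "ccharpoly M = map_poly complex_of_real (charpoly M)"

definition eigenvalues :: "real^'n^'n \<Rightarrow> complex set" where
  "eigenvalues M = {c. poly (ccharpoly M) c = 0}"

definition unstable_dim :: "real^'n^'n \<Rightarrow> nat" where
  "unstable_dim M = (\<Sum>c \<in> {c \<in> eigenvalues M. Re c > 0}. order c (ccharpoly M))"

definition stable_dim :: "real^'n^'n \<Rightarrow> nat" where
  "stable_dim M = (\<Sum>c \<in> {c \<in> eigenvalues M. Re c < 0}. order c (ccharpoly M))"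

definition hyperbolic :: "real^'n^'n \<Rightarrow> bool" where
  "hyperbolic M \<longleftrightarrow> (\<forall>c \<in> eigenvalues M. Re c \<noteq> 0)"

definition unstable_node_matrix :: "real^'n^'n \<Rightarrow> bool" where
  "unstable_node_matrix M \<longleftrightarrow> (\<forall>c \<in> eigenvalues M. Im c = 0 \<and> Re c > 0)"

definition saddle_matrix :: "real^'n^'n \<Rightarrow> bool" where
  "saddle_matrix M \<longleftrightarrow> hyperbolic M \<and> unstable_dim M > 0 \<and> stable_dim M > 0"

definition jacobian_is :: "(real^'n \<Rightarrow> real^'n) \<Rightarrow> real^'n \<Rightarrow> real^'n^'n \<Rightarrow> bool" where
  "jacobian_is F Q M \<longleftrightarrow> (F has_derivative (\<lambda>h. M *v h)) (at Q)"

definition critical_point :: "(real^'n \<Rightarrow> real^'n) \<Rightarrow> real^'n \<Rightarrow> bool" where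
  "critical_point F Q \<longleftrightarrow> F Q = 0"

definition unstable_node :: "(real^'n \<Rightarrow> real^'n) \<Rightarrow> real^'n \<Rightarrow> bool" where
  "unstable_node F Q \<longleftrightarrow> critical_point F Q \<and> (\<exists>M. jacobian_is F Q M \<and> unstable_node_matrix M)"

definition saddle_point :: "(real^'n \<Rightarrow> real^'n) \<Rightarrow> real^'n \<Rightarrow> bool" where
  "saddle_point F Q \<longleftrightarrow> critical_point F Q \<and> (\<exists>M. jacobian_is F Q M \<and> saddle_matrix M)"

text \<open>Dimensions of the linear unstable / stable subspaces at Q
  (equal to the dimensions of the unstable / stable manifolds).\<close>
definition unstable_manifold_dim :: "(real^'n \<Rightarrow> real^'n) \<Rightarrow> real^'n \<Rightarrow> nat \<Rightarrow> bool" where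
  "unstable_manifold_dim F Q k \<longleftrightarrow> (\<exists>M. jacobian_is F Q M \<and> unstable_dim M = k)"

definition stable_manifold_dim :: "(real^'n \<Rightarrow> real^'n) \<Rightarrow> real^'n \<Rightarrow> nat \<Rightarrow> bool" where
  "stable_manifold_dim F Q k \<longleftrightarrow> (\<exists>M. jacobian_is F Q M \<and> stable_dim M = k)"

definition unstable_manifold :: "(real^'n \<Rightarrow> real^'n) \<Rightarrow> real^'n \<Rightarrow> (real^'n) set" where
  "unstable_manifold F Q = {v. \<exists>u. u 0 = v \<and>
      (\<forall>t \<in> {..0}. (u has_vector_derivative F (u t)) (at t within {..0})) \<and>
      (u \<longlongrightarrow> Q) at_bot}"

definition stable_manifold :: "(real^'n \<Rightarrow> real^'n) \<Rightarrow> real^'n \<Rightarrow> (real^'n) set" where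
  "stable_manifold F Q = {v. \<exists>u. u 0 = v \<and>
      (\<forall>t \<in> {0..}. (u has_vector_derivative F (u t)) (at t within {0..})) \<and>
      (u \<longlongrightarrow> Q) at_top}"

definition is_profile :: "real \<Rightarrow> nat \<Rightarrow> real \<Rightarrow> real \<Rightarrow> real \<Rightarrow> (real \<Rightarrow> real) \<Rightarrow> bool" where
  "is_profile m N \<sigma> p R f \<longleftrightarrow> (\<exists>df g1 g2. \<forall>\<xi> \<in> {0<..<R}.
      f \<xi> > 0 \<and>
      (f has_real_derivative df \<xi>) (at \<xi>) \<and>
      ((\<lambda>s. f s powr m) has_real_derivative g1 \<xi>) (at \<xi>) \<and>
      (g1 has_real_derivative g2 \<xi>) (at \<xi>) \<and>
      g2 \<xi> + (real N - 1) / \<xi> * g1 \<xi> + alpha_par m \<sigma> p * f \<xi>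
        + beta_par m \<sigma> p * \<xi> * df \<xi> - \<xi> powr \<sigma> * f \<xi> powr p = 0)"

text \<open>(x,y,z) as functions of xi; the (S2) time variable is eta = ln xi.\<close>
definition xyz_of :: "real \<Rightarrow> real \<Rightarrow> real \<Rightarrow> (real \<Rightarrow> real) \<Rightarrow> real \<Rightarrow> real^3" where
  "xyz_of m \<sigma> p f \<xi> = vector
     [alpha_par m \<sigma> p / m * \<xi>^2 * f \<xi> powr (1 - m),
      \<xi> * deriv f \<xi> / f \<xi>,
      1 / m * \<xi> powr (\<sigma> + 2) * f \<xi> powr (p - m)]"

definition profile_traj_from :: "real \<Rightarrow> real \<Rightarrow> real \<Rightarrow> (real \<Rightarrow> real) \<Rightarrow> real^3 \<Rightarrow> bool" where
  "profile_traj_from m \<sigma> p f Q \<longleftrightarrow> ((\<lambda>\<eta>. xyz_of m \<sigma> p f (exp \<eta>)) \<longlongrightarrow> Q) at_bot"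

definition Q2 :: "real \<Rightarrow> nat \<Rightarrow> real^3" where
  "Q2 m N = vector [0, - (real N - 2) / m, 0]"

definition Z0 :: "real \<Rightarrow> nat \<Rightarrow> real \<Rightarrow> real \<Rightarrow> real" where
  "Z0 m N \<sigma> p = (\<sigma> + 2) * (m * (real N + \<sigma>) - p * (real N - 2)) / (p - m)^2"

definition Q3 :: "real \<Rightarrow> nat \<Rightarrow> real \<Rightarrow> real \<Rightarrow> real^3" where
  "Q3 m N \<sigma> p = vector [0, - (\<sigma> + 2) / (p - m), Z0 m N \<sigma> p]"

end

theory Submission
  imports Defs
begin


definition J2 :: "real \<Rightarrow> nat \<Rightarrow> real \<Rightarrow> real \<Rightarrow> real^3 \<Rightarrow> real^3^3" where
 "J2 m N \<sigma> p v = (let x = v$1; y = v$2; z = v$3 in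
   vector [vector [2 - (m-1)*y, -(m-1)*x, 0],
           vector [-1 - (p-m)/(\<sigma>+2)*y, -(real N - 2) - 2*m*y - (p-m)/(\<sigma>+2)*x, 1],
           vector [0, (p-m)*z, \<sigma>+2+(p-m)*y]])"

lemma S2_alt: "S2 m N \<sigma> p = (\<lambda>v. (v$1 * (2 - (m - 1) * v$2)) *\<^sub>R axis 1 1 +
   (- v$1 - (real N - 2) * v$2 + v$3 - m * (v$2)^2 - (p - m) / (\<sigma> + 2) * v$1 * v$2) *\<^sub>R axis 2 1
   + (v$3 * (\<sigma> + 2 + (p - m) * v$2)) *\<^sub>R axis 3 1)"
  by (rule ext) (simp add: S2_def Let_def vec_eq_iff forall_3 axis_def)

lemma hd_nth: "((\<lambda>v::real^3. v$i) has_derivative (\<lambda>h. h$i)) F"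
  by (rule bounded_linear.has_derivative[OF bounded_linear_vec_nth has_derivative_ident])

lemma S2_jac: "jacobian_is (S2 m N \<sigma> p) v (J2 m N \<sigma> p v)"
  unfolding jacobian_is_def S2_alt
  apply (rule has_derivative_eq_rhs)
   apply (rule derivative_eq_intros hd_nth refl)+
  apply (rule ext)
  apply (auto simp: Let_def J2_def vec_eq_iff forall_3 axis_def matrix_vector_mult_def sum_3 algebra_simps power2_eq_square)
  done
lemma map_of_real_lin: "map_poly (of_real::real\<Rightarrow>complex) ([:-a,1:]*q) = [:-of_real a,1:] * map_poly of_real q"
  by (auto simp: poly_eq_iff coeff_map_poly mult_pCons_left coeff_pCons split: nat.split)

lemma order_lin: "order (c::complex) [:-a,1:] = (if c = a then 1 else (0::nat))"
proof (cases "c = a")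
  case True thus ?thesis using order_power_n_n[of a 1] by simp
next
  case False thus ?thesis by (simp add: order_0I)
qed

lemma lin_nz: "[:-(a::'a::idom),1:] \<noteq> 0" by simp

lemma cp3:
  fixes M :: "real^'n^'n"
  assumes "charpoly M = [:-a,1:]*[:-b,1:]*[:-c,1:]"
  shows "eigenvalues M = complex_of_real ` {a,b,c}"
    "unstable_dim M = (if a>0 then 1 else 0)+(if b>0 then 1 else 0)+(if c>0 then 1 else 0)"
    "stable_dim M = (if a<0 then 1 else 0)+(if b<0 then 1 else 0)+(if c<0 then 1 else 0)"
proof -
  define A where "A = complex_of_real a"
  define B where "B = complex_of_real b"
  define C where "C = complex_of_real c"
  have cc: "ccharpoly M = [:-A,1:]*[:-B,1:]*[:-C,1:]"
  proof -
    have "charpoly M = [:-a,1:]*([:-b,1:]*([:-c,1:]*1))" by (simp only: assms mult.assoc mult_1_right)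
    hence "ccharpoly M = [:-A,1:]*([:-B,1:]*([:-C,1:]*map_poly of_real 1))"
      unfolding ccharpoly_def A_def B_def C_def by (simp only: map_of_real_lin)
    thus ?thesis by (simp only: mult.assoc map_poly_1 of_real_1 one_pCons[symmetric] mult_1_right)
  qed
  show ev: "eigenvalues M = complex_of_real ` {a,b,c}"
    unfolding eigenvalues_def cc poly_mult by (auto simp: A_def B_def C_def)
  have ord: "order x (ccharpoly M) = order x [:-A,1:] + order x [:-B,1:] + order x [:-C,1:]" for x
  proof -
    have nz1: "[:-A,1:]*[:-B,1:] \<noteq> 0" by (intro no_zero_divisors lin_nz)
    have nz2: "[:-A,1:]*[:-B,1:]*[:-C,1:] \<noteq> 0" by (intro no_zero_divisors lin_nz nz1)
    show ?thesis unfolding cc by (simp only: order_mult[OF nz2] order_mult[OF nz1])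
  qed
  have gen: "(\<Sum>x\<in>{x\<in>eigenvalues M. P x}. order x (ccharpoly M)) =
     (if P A then 1 else 0)+(if P B then 1 else 0)+(if P C then 1 else 0)" for P
  proof -
    have fin: "finite {x\<in>eigenvalues M. P x}" using ev by simp
    have "(\<Sum>x\<in>{x\<in>eigenvalues M. P x}. order x (ccharpoly M)) =
       (\<Sum>x\<in>{x\<in>eigenvalues M. P x}. (if x = A then 1 else 0) + (if x = B then 1 else 0) + (if x = C then 1 else 0))"
      by (rule sum.cong) (auto simp: ord order_lin)
    also have "\<dots> = (if A \<in> {x\<in>eigenvalues M. P x} then 1 else 0) + (if B \<in> {x\<in>eigenvalues M. P x} then 1 else 0)
       + (if C \<in> {x\<in>eigenvalues M. P x} then 1 else 0)"
      using fin by (simp add: sum.distrib sum.delta)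
    finally show ?thesis using ev by (auto simp: A_def B_def C_def)
  qed
  show "unstable_dim M = (if a>0 then 1 else 0)+(if b>0 then 1 else 0)+(if c>0 then 1 else 0)"
    unfolding unstable_dim_def gen by (simp add: A_def B_def C_def)
  show "stable_dim M = (if a<0 then 1 else 0)+(if b<0 then 1 else 0)+(if c<0 then 1 else 0)"
    unfolding stable_dim_def gen by (simp add: A_def B_def C_def)
qed
lemma charpoly_tri:
  fixes M :: "real^3^3"
  assumes "M$1$2 = 0" "M$1$3 = 0" "M$3$1 = 0" "M$3$2 = 0"
  shows "charpoly M = [:-M$1$1,1:]*[:-M$2$2,1:]*[:-M$3$3,1:]"
  unfolding charpoly_def det_3 using assms by simp

lemma charpoly_blk:
  fixes M :: "real^3^3"
  assumes "M$1$2 = 0" "M$1$3 = 0" "M$2$1 = 0" "M$3$1 = 0" "M$3$3 = 0"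
    and "r1 + r2 = M$2$2" "r1 * r2 = - (M$2$3 * M$3$2)"
  shows "charpoly M = [:-M$1$1,1:]*[:-r1,1:]*[:-r2,1:]"
proof -
  have "charpoly M = [:-M$1$1,1:]*([:-M$2$2,1:]*[:0,1:] - [:-M$2$3:]*[:-M$3$2:])"
    unfolding charpoly_def det_3 using assms by (simp add: algebra_simps)
  also have "[:-M$2$2,1:]*[:0,1:] - [:-M$2$3:]*[:-M$3$2:] = [:-r1,1:]*[:-r2,1:]"
    using assms(6,7) by (simp add: algebra_simps)
  finally show ?thesis by (simp only: mult.assoc)
qed

lemma L_pos: assumes "m > 1" "\<sigma> > 0" "p > m" shows "L_par m \<sigma> p > 0"
  using assms unfolding L_par_def by (smt (verit) mult_pos_pos)

lemma Q2_facts: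
  fixes m \<sigma> p :: real and N :: nat
  assumes hm: "m > 1" and h\<sigma>: "\<sigma> > 0" and hp: "p > m" and hN: "N \<ge> 3"
  defines "M \<equiv> J2 m N \<sigma> p (Q2 m N)"
  defines "l3 \<equiv> (m * (real N + \<sigma>) - p * (real N - 2)) / m"
  shows "critical_point (S2 m N \<sigma> p) (Q2 m N)"
    "charpoly M = [:-(2 + (m-1)*(real N-2)/m),1:]*[:-(real N - 2),1:]*[:-l3,1:]"
    "2 + (m-1)*(real N-2)/m > 0" "real N - 2 > 0"
    "l3 > 0 \<longleftrightarrow> p < m * (real N + \<sigma>) / (real N - 2)"
    "l3 < 0 \<longleftrightarrow> p > m * (real N + \<sigma>) / (real N - 2)"
proof -
  have N2: "real N - 2 > 0" using hN by simp
  thus "real N - 2 > 0" .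
  show "critical_point (S2 m N \<sigma> p) (Q2 m N)"
    using hm by (simp add: critical_point_def S2_def Q2_def vec_eq_iff forall_3 power2_eq_square field_simps)
  have e: "M$1$1 = 2 + (m-1)*(real N-2)/m" "M$2$2 = real N - 2" "M$3$3 = l3"
     "M$1$2 = 0" "M$1$3 = 0" "M$3$1 = 0" "M$3$2 = 0"
    using hm by (auto simp: M_def l3_def J2_def Q2_def field_simps)
  show "charpoly M = [:-(2 + (m-1)*(real N-2)/m),1:]*[:-(real N - 2),1:]*[:-l3,1:]"
    using charpoly_tri[OF e(4-7)] by (simp only: e)
  show "2 + (m-1)*(real N-2)/m > 0" using hm N2 by (simp add: add_pos_nonneg)
  show "l3 > 0 \<longleftrightarrow> p < m * (real N + \<sigma>) / (real N - 2)"
    using hm N2 by (simp add: l3_def pos_less_divide_eq field_simps)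
  show "l3 < 0 \<longleftrightarrow> p > m * (real N + \<sigma>) / (real N - 2)"
    using hm N2 by (simp add: l3_def pos_divide_less_eq field_simps)
qed

lemma Q3_facts:
  fixes m \<sigma> p :: real and N :: nat
  assumes hm: "m > 1" and h\<sigma>: "\<sigma> > 0" and hp: "p > m" and hN: "N \<ge> 3"
    and hpc: "p < m * (real N + \<sigma>) / (real N - 2)"
  defines "M \<equiv> J2 m N \<sigma> p (Q3 m N \<sigma> p)"
  defines "a \<equiv> -(real N - 2) + 2*m*(\<sigma>+2)/(p-m)"
  defines "b \<equiv> (p-m) * Z0 m N \<sigma> p"
  defines "r1 \<equiv> (a + sqrt (a^2 + 4*b))/2"
  defines "r2 \<equiv> (a - sqrt (a^2 + 4*b))/2"
  shows "critical_point (S2 m N \<sigma> p) (Q3 m N \<sigma> p)"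
    "charpoly M = [:-(2 + (m-1)*(\<sigma>+2)/(p-m)),1:]*[:-r1,1:]*[:-r2,1:]"
    "2 + (m-1)*(\<sigma>+2)/(p-m) > 0" "r1 > 0" "r2 < 0" "Z0 m N \<sigma> p > 0"
proof -
  have N2: "real N - 2 > 0" using hN by simp
  have pm: "p - m > 0" using hp by simp
  have Zp: "Z0 m N \<sigma> p > 0"
  proof -
    have "p * (real N - 2) < m * (real N + \<sigma>)" using hpc N2 by (simp add: pos_less_divide_eq)
    thus ?thesis using h\<sigma> pm unfolding Z0_def by (intro divide_pos_pos mult_pos_pos) auto
  qed
  thus "Z0 m N \<sigma> p > 0" .
  show "critical_point (S2 m N \<sigma> p) (Q3 m N \<sigma> p)"
  proof -
    define y3 where "y3 = - (\<sigma> + 2) / (p - m)"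
    have c3: "\<sigma> + 2 + (p - m) * y3 = 0" using pm by (simp add: y3_def)
    have c2: "- (real N - 2) * y3 + Z0 m N \<sigma> p - m * y3^2 = 0"
    proof -
      define d where "d = p - m"
      have d0: "d \<noteq> 0" using pm by (simp add: d_def)
      have z: "Z0 m N \<sigma> p = (\<sigma>+2)*(m*(\<sigma>+2) - (real N-2)*d)/d^2"
        unfolding Z0_def d_def by (simp add: algebra_simps)
      have y: "y3 = - (\<sigma> + 2) / d" by (simp add: y3_def d_def)
      show ?thesis unfolding z y using d0 by (simp add: field_simps power2_eq_square)
    qed
    have q: "Q3 m N \<sigma> p $ 1 = 0" "Q3 m N \<sigma> p $ 2 = y3" "Q3 m N \<sigma> p $ 3 = Z0 m N \<sigma> p"
      by (simp_all add: Q3_def y3_def)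
    show ?thesis unfolding critical_point_def S2_def Let_def q
      using c2 c3 by (simp add: vec_eq_iff forall_3 algebra_simps)
  qed
  have bp: "b > 0" using Zp pm by (simp add: b_def)
  have sq: "sqrt (a^2 + 4*b) > \<bar>a\<bar>"
  proof -
    have "sqrt (a^2) < sqrt (a^2 + 4*b)" using bp by (intro real_sqrt_less_mono) simp
    thus ?thesis by simp
  qed
  show "r1 > 0" "r2 < 0" using sq by (auto simp: r1_def r2_def)
  have q: "Q3 m N \<sigma> p $ 1 = 0" "Q3 m N \<sigma> p $ 2 = - (\<sigma> + 2) / (p - m)" "Q3 m N \<sigma> p $ 3 = Z0 m N \<sigma> p"
    by (simp_all add: Q3_def)
  have Mq: "M = vector [vector [2 - (m-1)*(- (\<sigma> + 2) / (p - m)), -(m-1)*0, 0],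
           vector [-1 - (p-m)/(\<sigma>+2)*(- (\<sigma> + 2) / (p - m)), -(real N - 2) - 2*m*(- (\<sigma> + 2) / (p - m)) - (p-m)/(\<sigma>+2)*0, 1],
           vector [0, (p-m)*Z0 m N \<sigma> p, \<sigma>+2+(p-m)*(- (\<sigma> + 2) / (p - m))]]"
    unfolding M_def J2_def Let_def q ..
  have e: "M$1$1 = 2 + (m-1)*(\<sigma>+2)/(p-m)" "M$2$2 = a" "M$2$3 = 1" "M$3$2 = b"
     "M$1$2 = 0" "M$1$3 = 0" "M$2$1 = 0" "M$3$1 = 0" "M$3$3 = 0"
    using pm h\<sigma> unfolding Mq by (simp_all add: a_def b_def) (simp_all add: field_simps)
  have s1: "r1 + r2 = M$2$2" unfolding e r1_def r2_def by (simp add: field_simps)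
  have s2: "r1 * r2 = - (M$2$3 * M$3$2)"
  proof -
    have "(sqrt (a^2 + 4*b))^2 = a^2 + 4*b" using bp by (intro real_sqrt_pow2) (simp add: add_nonneg_pos)
    thus ?thesis unfolding e r1_def r2_def by (simp add: power2_eq_square algebra_simps)
  qed
  show "charpoly M = [:-(2 + (m-1)*(\<sigma>+2)/(p-m)),1:]*[:-r1,1:]*[:-r2,1:]"
    using charpoly_blk[OF e(5-9) s1 s2] by (simp only: e)
  show "2 + (m-1)*(\<sigma>+2)/(p-m) > 0" using hm pm h\<sigma> by (simp add: add_pos_nonneg)
qed



lemma back_zero:
  fixes w g :: "real \<Rightarrow> real" and T :: real
  assumes w0: "\<And>t. t \<le> 0 \<Longrightarrow> w t \<ge> 0"
    and d: "\<And>t. t \<le> 0 \<Longrightarrow> (w has_real_derivative g t * w t) (at t within {..0})"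
    and gc: "continuous_on {..0} g"
    and T: "T \<le> 0" and gT: "\<And>t. t \<le> T \<Longrightarrow> g t \<le> 0"
    and lim: "(w \<longlongrightarrow> 0) at_bot"
  shows "w 0 = 0"
proof -
  have dat: "(w has_real_derivative g t * w t) (at t)" if "t < 0" for t
  proof -
    have "(w has_real_derivative g t * w t) (at t within {..<0})"
      using that by (intro DERIV_subset[OF d]) auto
    thus ?thesis using at_within_open[of t "{..<0::real}"] that by simp
  qed
  have cw: "continuous_on {..0} w"
    unfolding continuous_on_eq_continuous_within using d DERIV_continuous by blast
  have wT: "w T \<le> w s" if "s \<le> T" for s
  proof (rule DERIV_nonpos_imp_decreasing_open[OF that])
    fix x assume "s < x" "x < T"
    thus "\<exists>y. (w has_real_derivative y) (at x) \<and> y \<le> 0"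
      using T gT[of x] w0[of x] by (intro exI[of _ "g x * w x"]) (auto intro: dat mult_nonpos_nonneg)
  next
    show "continuous_on {s..T} w" using T by (intro continuous_on_subset[OF cw]) auto
  qed
  have "w T \<le> 0"
    using lim by (rule tendsto_lowerbound) (auto simp: eventually_at_bot_linorder intro!: exI[of _ T] wT)
  hence wT0: "w T = 0" using w0[OF T] by simp
  obtain x where x: "x \<in> {T..0}" "\<forall>y\<in>{T..0}. g y \<le> g x"
  proof -
    have "continuous_on {T..0} g" using gc by (rule continuous_on_subset) auto
    thus ?thesis using continuous_attains_sup[of "{T..0}" g] T that by auto
  qed
  define K where "K = max 0 (g x)"
  have gK: "g y \<le> K" if "y \<in> {T..0}" for y using x(2) that unfolding K_def by force
  define \<phi> where "\<phi> t = w t * exp (- K * t)" for t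
  have "\<phi> T \<ge> \<phi> 0"
  proof (rule DERIV_nonpos_imp_decreasing_open[OF T])
    fix y assume y: "T < y" "y < 0"
    have "(\<phi> has_real_derivative (g y * w y) * exp (- K * y) + w y * (exp (- K * y) * (- K * 1))) (at y)"
      unfolding \<phi>_def using dat[of y] y by (intro derivative_eq_intros refl) auto
    moreover have "(g y * w y) * exp (- K * y) + w y * (exp (- K * y) * (- K * 1)) = (g y - K) * w y * exp (- K * y)"
      by (simp add: algebra_simps)
    moreover have "(g y - K) * w y * exp (- K * y) \<le> 0"
      using gK[of y] y w0[of y] by (intro mult_nonpos_nonneg) (auto intro: mult_nonpos_nonneg)
    ultimately show "\<exists>D. (\<phi> has_real_derivative D) (at y) \<and> D \<le> 0" by auto
  next
    show "continuous_on {T..0} \<phi>" unfolding \<phi>_def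
      by (intro continuous_intros continuous_on_subset[OF cw]) auto
  qed
  thus ?thesis using wT0 w0[of 0] by (simp add: \<phi>_def)
qed

lemma fwd_zero:
  fixes w g :: "real \<Rightarrow> real" and T :: real
  assumes w0: "\<And>t. t \<ge> 0 \<Longrightarrow> w t \<ge> 0"
    and d: "\<And>t. t \<ge> 0 \<Longrightarrow> (w has_real_derivative g t * w t) (at t within {0..})"
    and gc: "continuous_on {0..} g"
    and T: "T \<ge> 0" and gT: "\<And>t. t \<ge> T \<Longrightarrow> g t \<ge> 0"
    and lim: "(w \<longlongrightarrow> 0) at_top"
  shows "w 0 = 0"
proof -
  have dat: "(w has_real_derivative g t * w t) (at t)" if "t > 0" for t
  proof -
    have "(w has_real_derivative g t * w t) (at t within {0<..})"
      using that by (intro DERIV_subset[OF d]) auto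
    thus ?thesis using at_within_open[of t "{0::real<..}"] that by simp
  qed
  have cw: "continuous_on {0..} w"
    unfolding continuous_on_eq_continuous_within using d DERIV_continuous by blast
  have wT: "w T \<le> w s" if "T \<le> s" for s
  proof (rule DERIV_nonneg_imp_increasing_open[OF that])
    fix x assume "T < x" "x < s"
    thus "\<exists>y. (w has_real_derivative y) (at x) \<and> y \<ge> 0"
      using T gT[of x] w0[of x] by (intro exI[of _ "g x * w x"]) (auto intro: dat)
  next
    show "continuous_on {T..s} w" using T by (intro continuous_on_subset[OF cw]) auto
  qed
  have "w T \<le> 0"
    using lim by (rule tendsto_lowerbound) (auto simp: eventually_at_top_linorder intro!: exI[of _ T] wT)
  hence wT0: "w T = 0" using w0[OF T] by simp
  obtain x where x: "x \<in> {0..T}" "\<forall>y\<in>{0..T}. g x \<le> g y"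
  proof -
    have "continuous_on {0..T} g" using gc by (rule continuous_on_subset) auto
    thus ?thesis using continuous_attains_inf[of "{0..T}" g] T that by auto
  qed
  define K where "K = max 0 (- g x)"
  have gK: "g y \<ge> - K" if "y \<in> {0..T}" for y using x(2) that unfolding K_def by force
  define \<phi> where "\<phi> t = w t * exp (K * t)" for t
  have "\<phi> 0 \<le> \<phi> T"
  proof (rule DERIV_nonneg_imp_increasing_open[OF T])
    fix y assume y: "0 < y" "y < T"
    have "(\<phi> has_real_derivative (g y * w y) * exp (K * y) + w y * (exp (K * y) * (K * 1))) (at y)"
      unfolding \<phi>_def using dat[of y] y by (intro derivative_eq_intros refl) auto
    moreover have "(g y * w y) * exp (K * y) + w y * (exp (K * y) * (K * 1)) = (g y + K) * w y * exp (K * y)"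
      by (simp add: algebra_simps)
    moreover have "(g y + K) * w y * exp (K * y) \<ge> 0"
      using gK[of y] y w0[of y] by (intro mult_nonneg_nonneg) auto
    ultimately show "\<exists>D. (\<phi> has_real_derivative D) (at y) \<and> D \<ge> 0" by auto
  next
    show "continuous_on {0..T} \<phi>" unfolding \<phi>_def
      by (intro continuous_intros continuous_on_subset[OF cw]) auto
  qed
  thus ?thesis using wT0 w0[of 0] by (simp add: \<phi>_def)
qed

lemma vd_nth: "(u has_vector_derivative D) F \<Longrightarrow> ((\<lambda>t. u t $ i) has_real_derivative D $ i) F"
  unfolding has_vector_derivative_def has_field_derivative_def
proof -
  assume "(u has_derivative (\<lambda>h. h *\<^sub>R D)) F"
  from bounded_linear.has_derivative[OF bounded_linear_vec_nth[of i] this]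
  have "((\<lambda>t. u t $ i) has_derivative (\<lambda>x. x * D $ i)) F" by simp
  moreover have "(\<lambda>x. x * D $ i) = (*) (D $ i)" by (rule ext) simp
  ultimately show "((\<lambda>t. u t $ i) has_derivative (*) (D $ i)) F" by simp
qed

lemma S2_comp: "S2 m N \<sigma> p v $ 1 = v$1 * (2 - (m - 1) * v$2)"
  "S2 m N \<sigma> p v $ 3 = v$3 * (\<sigma> + 2 + (p - m) * v$2)"
  by (simp_all add: S2_def Let_def)

lemma unstable_z0:
  assumes "Q $ 3 = 0" and neg: "\<sigma> + 2 + (p - m) * Q $ 2 < 0"
  shows "unstable_manifold (S2 m N \<sigma> p) Q \<subseteq> {v. v$3 = 0}"
proof
  fix v assume "v \<in> unstable_manifold (S2 m N \<sigma> p) Q"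
  then obtain u where u0: "u 0 = v"
    and du: "\<And>t. t \<in> {..0} \<Longrightarrow> (u has_vector_derivative S2 m N \<sigma> p (u t)) (at t within {..0})"
    and lu: "(u \<longlongrightarrow> Q) at_bot"
    unfolding unstable_manifold_def by blast
  define w where "w t = (u t $ 3)^2" for t
  define g where "g t = 2 * (\<sigma> + 2 + (p - m) * u t $ 2)" for t
  have d3: "((\<lambda>t. u t $ 3) has_real_derivative u t $ 3 * (\<sigma> + 2 + (p - m) * u t $ 2)) (at t within {..0})"
    if "t \<le> 0" for t using vd_nth[OF du[of t], of 3] that by (simp add: S2_comp)
  have d2: "((\<lambda>t. u t $ 2) has_real_derivative S2 m N \<sigma> p (u t) $ 2) (at t within {..0})"
    if "t \<le> 0" for t using vd_nth[OF du[of t], of 2] that by simp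
  have dw: "(w has_real_derivative g t * w t) (at t within {..0})" if "t \<le> 0" for t
    unfolding w_def g_def using d3[OF that]
    by (intro derivative_eq_intros refl) (auto simp: power2_eq_square algebra_simps)
  have gc: "continuous_on {..0} g"
  proof -
    have "continuous_on {..0} (\<lambda>t. u t $ 2)"
      unfolding continuous_on_eq_continuous_within using d2 DERIV_continuous by blast
    thus ?thesis unfolding g_def
      by (rule continuous_on_mult_left[OF continuous_on_add[OF continuous_on_const continuous_on_mult_left]])
  qed
  have "(g \<longlongrightarrow> 2 * (\<sigma> + 2 + (p - m) * Q $ 2)) at_bot"
    unfolding g_def by (intro tendsto_intros lu)
  hence "eventually (\<lambda>t. g t < 0) at_bot" by (rule order_tendstoD(2)) (use neg in simp)
  then obtain T where T: "\<And>t. t \<le> T \<Longrightarrow> g t < 0" unfolding eventually_at_bot_linorder by blast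
  have lw: "(w \<longlongrightarrow> 0) at_bot"
  proof -
    have "(w \<longlongrightarrow> (Q $ 3)^2) at_bot" unfolding w_def by (intro tendsto_intros lu)
    thus ?thesis using assms(1) by simp
  qed
  have "w 0 = 0"
    apply (rule back_zero[of w g "min T 0"])
         apply (simp add: w_def)
        apply (erule dw)
       apply (rule gc)
      apply simp
     apply (rule less_imp_le, rule T, simp)
    apply (rule lw)
    done
  thus "v \<in> {v. v$3 = 0}" using u0 by (simp add: w_def)
qed

lemma stable_x0:
  assumes "Q $ 1 = 0" and pos: "2 - (m - 1) * Q $ 2 > 0"
  shows "stable_manifold (S2 m N \<sigma> p) Q \<subseteq> {v. v$1 = 0}"
proof
  fix v assume "v \<in> stable_manifold (S2 m N \<sigma> p) Q"
  then obtain u where u0: "u 0 = v"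
    and du: "\<And>t. t \<in> {0..} \<Longrightarrow> (u has_vector_derivative S2 m N \<sigma> p (u t)) (at t within {0..})"
    and lu: "(u \<longlongrightarrow> Q) at_top"
    unfolding stable_manifold_def by blast
  define w where "w t = (u t $ 1)^2" for t
  define g where "g t = 2 * (2 - (m - 1) * u t $ 2)" for t
  have d3: "((\<lambda>t. u t $ 1) has_real_derivative u t $ 1 * (2 - (m - 1) * u t $ 2)) (at t within {0..})"
    if "t \<ge> 0" for t using vd_nth[OF du[of t], of 1] that by (simp add: S2_comp)
  have d2: "((\<lambda>t. u t $ 2) has_real_derivative S2 m N \<sigma> p (u t) $ 2) (at t within {0..})"
    if "t \<ge> 0" for t using vd_nth[OF du[of t], of 2] that by simp
  have dw: "(w has_real_derivative g t * w t) (at t within {0..})" if "t \<ge> 0" for t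
    unfolding w_def g_def using d3[OF that]
    by (intro derivative_eq_intros refl) (auto simp: power2_eq_square algebra_simps)
  have gc: "continuous_on {0..} g"
  proof -
    have "continuous_on {0..} (\<lambda>t. u t $ 2)"
      unfolding continuous_on_eq_continuous_within using d2 DERIV_continuous by blast
    thus ?thesis unfolding g_def
      by (rule continuous_on_mult_left[OF continuous_on_diff[OF continuous_on_const continuous_on_mult_left]])
  qed
  have "(g \<longlongrightarrow> 2 * (2 - (m - 1) * Q $ 2)) at_top"
    unfolding g_def by (intro tendsto_intros lu)
  hence "eventually (\<lambda>t. g t > 0) at_top" by (rule order_tendstoD(1)) (use pos in simp)
  then obtain T where T: "\<And>t. t \<ge> T \<Longrightarrow> g t > 0" unfolding eventually_at_top_linorder by blast
  have lw: "(w \<longlongrightarrow> 0) at_top"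
  proof -
    have "(w \<longlongrightarrow> (Q $ 1)^2) at_top" unfolding w_def by (intro tendsto_intros lu)
    thus ?thesis using assms(1) by simp
  qed
  have "w 0 = 0"
    apply (rule fwd_zero[of w g "max T 0"])
         apply (simp add: w_def)
        apply (erule dw)
       apply (rule gc)
      apply simp
     apply (rule less_imp_le, rule T, simp)
    apply (rule lw)
    done
  thus "v \<in> {v. v$1 = 0}" using u0 by (simp add: w_def)
qed


lemma xpowr_deriv: "(x::real) > 0 \<Longrightarrow> ((\<lambda>t. t powr r) has_real_derivative r * x powr r / x) (at x)"
  using DERIV_powr[of "\<lambda>t. t" 1 x "\<lambda>_. r" 0] by (simp add: mult.commute)

lemma powr_at0: "(d::real) > 0 \<Longrightarrow> ((\<lambda>x. x powr d) \<longlongrightarrow> 0) (at_right 0)"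
  by (rule tendsto_zero_powrI[OF tendsto_ident_at tendsto_const])
     (auto simp: eventually_at_right_less eventually_mono[OF eventually_at_right_less])

lemma growth_bound:
  fixes h h' :: "real \<Rightarrow> real"
  assumes b: "b > 0"
    and dh: "\<And>x. x \<in> {0<..b} \<Longrightarrow> (h has_real_derivative h' x) (at x)"
    and ineq: "\<And>x. x \<in> {0<..b} \<Longrightarrow> x * h' x \<ge> \<nu> * h x"
    and x: "x \<in> {0<..b}"
  shows "h x \<le> (h b * b powr (-\<nu>)) * x powr \<nu>"
proof -
  define G where "G t = h t * t powr (-\<nu>)" for t
  have "G x \<le> G b"
  proof (rule DERIV_nonneg_imp_nondecreasing[of x b G])
    show "x \<le> b" using x by simp
    fix t assume t: "x \<le> t" "t \<le> b"
    hence t0: "t > 0" "t \<in> {0<..b}" using x by auto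
    have "(G has_real_derivative h' t * t powr (-\<nu>) + (-\<nu> * t powr (-\<nu>) / t) * h t) (at t)"
      unfolding G_def by (rule DERIV_mult[OF dh[OF t0(2)] xpowr_deriv[OF t0(1)]])
    moreover have "h' t * t powr (-\<nu>) + (-\<nu> * t powr (-\<nu>) / t) * h t = (t * h' t - \<nu> * h t) * (t powr (-\<nu>) / t)"
      using t0 by (simp add: field_simps)
    moreover have "(t * h' t - \<nu> * h t) * (t powr (-\<nu>) / t) \<ge> 0"
      using ineq[OF t0(2)] t0 by (intro mult_nonneg_nonneg) auto
    ultimately show "\<exists>y. (G has_real_derivative y) (at t) \<and> 0 \<le> y" by auto
  qed
  hence "h x * x powr (-\<nu>) \<le> h b * b powr (-\<nu>)" by (simp add: G_def)
  hence "h x * x powr (-\<nu>) * x powr \<nu> \<le> h b * b powr (-\<nu>) * x powr \<nu>"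
    by (rule mult_right_mono) simp
  thus ?thesis using x by (simp add: powr_minus field_simps)
qed

lemma decr_bound:
  fixes h h' :: "real \<Rightarrow> real"
  assumes dh: "\<And>x. x \<in> {0<..b} \<Longrightarrow> (h has_real_derivative h' x) (at x)"
    and neg: "\<And>x. x \<in> {0<..b} \<Longrightarrow> h' x \<le> 0"
    and x: "x \<in> {0<..b}"
  shows "h x \<ge> h b"
  using x by (intro DERIV_nonpos_imp_nonincreasing[of x b h]) (auto intro!: exI dh neg)

lemma incr_lim:
  fixes \<psi> :: "real \<Rightarrow> real"
  assumes b: "b > 0"
    and mono: "\<And>x y. 0 < x \<Longrightarrow> x \<le> y \<Longrightarrow> y \<le> b \<Longrightarrow> \<psi> x \<le> \<psi> y"
    and lb: "\<And>x. x \<in> {0<..b} \<Longrightarrow> \<psi> x \<ge> B"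
  shows "(\<psi> \<longlongrightarrow> Inf (\<psi> ` {0<..b})) (at_right 0)"
proof (rule order_tendstoI)
  let ?L = "Inf (\<psi> ` {0<..b})"
  have bdd: "bdd_below (\<psi> ` {0<..b})" by (rule bdd_belowI2[where m=B]) (rule lb)
  have ne: "\<psi> ` {0<..b} \<noteq> {}" using b by auto
  fix a assume "a < ?L"
  moreover have "?L \<le> \<psi> x" if "x \<in> {0<..b}" for x using bdd that by (auto intro: cInf_lower)
  ultimately show "eventually (\<lambda>x. a < \<psi> x) (at_right 0)"
    unfolding eventually_at_right_field using b by (intro exI[of _ b]) force
next
  let ?L = "Inf (\<psi> ` {0<..b})"
  fix a assume "?L < a"
  then obtain y where y: "y \<in> {0<..b}" "\<psi> y < a"
    using cInf_lessD[of "\<psi> ` {0<..b}" a] b by auto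
  show "eventually (\<lambda>x. \<psi> x < a) (at_right 0)"
    unfolding eventually_at_right_field using y
    by (intro exI[of _ y]) (use y in \<open>auto, meson le_less_trans less_imp_le mono\<close>)
qed

lemma log_lim:
  fixes \<phi> \<phi>' :: "real \<Rightarrow> real"
  assumes b: "b > 0" and \<delta>: "\<delta> > 0"
    and d: "\<And>x. x \<in> {0<..b} \<Longrightarrow> (\<phi> has_real_derivative \<phi>' x) (at x)"
    and bd: "\<And>x. x \<in> {0<..b} \<Longrightarrow> \<bar>x * \<phi>' x\<bar> \<le> K * x powr \<delta>"
  shows "\<exists>L. (\<phi> \<longlongrightarrow> L) (at_right 0)"
proof -
  define \<psi>1 where "\<psi>1 x = \<phi> x + K / \<delta> * x powr \<delta>" for x
  define \<psi>2 where "\<psi>2 x = \<phi> x - K / \<delta> * x powr \<delta>" for x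
  have d1: "(\<psi>1 has_real_derivative \<phi>' x + K / \<delta> * (\<delta> * x powr \<delta> / x)) (at x)" if "x \<in> {0<..b}" for x
    unfolding \<psi>1_def using that by (intro DERIV_add[OF d[OF that] DERIV_cmult[OF xpowr_deriv]]) auto
  have d2: "(\<psi>2 has_real_derivative \<phi>' x - K / \<delta> * (\<delta> * x powr \<delta> / x)) (at x)" if "x \<in> {0<..b}" for x
    unfolding \<psi>2_def using that by (intro DERIV_diff[OF d[OF that] DERIV_cmult[OF xpowr_deriv]]) auto
  have s1: "\<phi>' x + K / \<delta> * (\<delta> * x powr \<delta> / x) \<ge> 0" and s2: "\<phi>' x - K / \<delta> * (\<delta> * x powr \<delta> / x) \<le> 0"
    if "x \<in> {0<..b}" for x
  proof -
    have x0: "x > 0" using that by simp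
    have e: "K / \<delta> * (\<delta> * x powr \<delta> / x) = K * x powr \<delta> / x" using \<delta> by simp
    have "\<bar>\<phi>' x\<bar> \<le> K * x powr \<delta> / x" using bd[OF that] x0 by (simp add: abs_mult pos_le_divide_eq mult.commute)
    thus "\<phi>' x + K / \<delta> * (\<delta> * x powr \<delta> / x) \<ge> 0" "\<phi>' x - K / \<delta> * (\<delta> * x powr \<delta> / x) \<le> 0"
      unfolding e by linarith+
  qed
  have mono: "\<psi>1 x \<le> \<psi>1 y" if "0 < x" "x \<le> y" "y \<le> b" for x y
    using that by (intro DERIV_nonneg_imp_nondecreasing[of x y \<psi>1]) (auto intro!: exI d1 s1)
  have lb: "\<psi>1 x \<ge> \<psi>2 b" if "x \<in> {0<..b}" for x
  proof -
    have "\<psi>2 x \<ge> \<psi>2 b" by (rule decr_bound[OF d2 s2 that])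
    moreover have "\<psi>1 x \<ge> \<psi>2 x"
    proof -
      have "K * x powr \<delta> \<ge> 0" using bd[OF that] by linarith
      hence "K / \<delta> * x powr \<delta> \<ge> 0" using \<delta> by (simp add: divide_nonneg_pos mult.commute[of K] )
      thus ?thesis by (simp add: \<psi>1_def \<psi>2_def)
    qed
    ultimately show ?thesis by simp
  qed
  have l1: "(\<psi>1 \<longlongrightarrow> Inf (\<psi>1 ` {0<..b})) (at_right 0)" by (rule incr_lim[OF b mono lb]) auto
  have "((\<lambda>x. \<psi>1 x - K / \<delta> * x powr \<delta>) \<longlongrightarrow> Inf (\<psi>1 ` {0<..b}) - K / \<delta> * 0) (at_right 0)"
    by (intro tendsto_intros l1 powr_at0 \<delta>)
  thus ?thesis by (auto simp: \<psi>1_def)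
qed


lemma core:
  fixes X Y Z X' Y' Z' :: "real \<Rightarrow> real" and m n2 \<sigma> p c \<mu>1 \<mu>3 B b :: real
  assumes b: "0 < b" "b \<le> 1" and n2: "n2 > 0" and m: "m > 0" and \<mu>: "\<mu>1 > 0" "\<mu>3 > 0"
    and dX: "\<And>x. x \<in> {0<..b} \<Longrightarrow> (X has_real_derivative X' x) (at x)"
    and eX: "\<And>x. x \<in> {0<..b} \<Longrightarrow> x * X' x = (2 + (1 - m) * Y x) * X x"
    and pX: "\<And>x. x \<in> {0<..b} \<Longrightarrow> X x > 0"
    and dZ: "\<And>x. x \<in> {0<..b} \<Longrightarrow> (Z has_real_derivative Z' x) (at x)"
    and eZ: "\<And>x. x \<in> {0<..b} \<Longrightarrow> x * Z' x = (\<sigma> + 2 + (p - m) * Y x) * Z x"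
    and pZ: "\<And>x. x \<in> {0<..b} \<Longrightarrow> Z x > 0"
    and dY: "\<And>x. x \<in> {0<..b} \<Longrightarrow> (Y has_real_derivative Y' x) (at x)"
    and eY: "\<And>x. x \<in> {0<..b} \<Longrightarrow> x * Y' x = - n2 * Y x - X x - c * X x * Y x + Z x - m * (Y x)^2"
    and b1: "\<And>x. x \<in> {0<..b} \<Longrightarrow> 2 + (1 - m) * Y x \<ge> \<mu>1"
    and b3: "\<And>x. x \<in> {0<..b} \<Longrightarrow> \<sigma> + 2 + (p - m) * Y x \<ge> \<mu>3"
    and bY: "\<And>x. x \<in> {0<..b} \<Longrightarrow> \<bar>Y x\<bar> \<le> B"
    and bw: "\<And>x. x \<in> {0<..b} \<Longrightarrow> n2 - m * (Y x + n2 / m) \<ge> n2 / 2"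
  shows "\<exists>K \<delta>. \<delta> > 0 \<and> (\<forall>x\<in>{0<..b}. \<bar>Y x + n2 / m\<bar> \<le> K * x powr \<delta>)"
proof -
  define KX where "KX = X b * b powr (-\<mu>1)"
  define KZ where "KZ = Z b * b powr (-\<mu>3)"
  have bb: "b \<in> {0<..b}" using b by simp
  have KX0: "KX \<ge> 0" using pX[OF bb] by (simp add: KX_def)
  have KZ0: "KZ \<ge> 0" using pZ[OF bb] by (simp add: KZ_def)
  have Xb: "X x \<le> KX * x powr \<mu>1" if "x \<in> {0<..b}" for x
    unfolding KX_def
  proof (rule growth_bound[OF b(1) dX _ that])
    fix t assume t: "t \<in> {0<..b}"
    show "\<mu>1 * X t \<le> t * X' t" unfolding eX[OF t]
      using b1[OF t] pX[OF t] by (intro mult_right_mono) auto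
  qed
  have Zb: "Z x \<le> KZ * x powr \<mu>3" if "x \<in> {0<..b}" for x
    unfolding KZ_def
  proof (rule growth_bound[OF b(1) dZ _ that])
    fix t assume t: "t \<in> {0<..b}"
    show "\<mu>3 * Z t \<le> t * Z' t" unfolding eZ[OF t]
      using b3[OF t] pZ[OF t] by (intro mult_right_mono) auto
  qed
  define \<mu> where "\<mu> = min \<mu>1 \<mu>3"
  have \<mu>0: "\<mu> > 0" using \<mu> by (simp add: \<mu>_def)
  define E where "E x = - X x - c * X x * Y x + Z x" for x
  define KE where "KE = KX * (1 + \<bar>c\<bar> * B) + KZ"
  have B0: "B \<ge> 0" using bY[OF bb] by linarith
  have KE0: "KE \<ge> 0" using KX0 KZ0 B0 by (simp add: KE_def)
  have Eb: "\<bar>E x\<bar> \<le> KE * x powr \<mu>" if x: "x \<in> {0<..b}" for x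
  proof -
    have x1: "0 < x" "x \<le> 1" using x b by auto
    have p1: "x powr \<mu>1 \<le> x powr \<mu>" "x powr \<mu>3 \<le> x powr \<mu>"
      using x1 by (auto intro!: powr_mono' simp: \<mu>_def)
    have "\<bar>E x\<bar> \<le> X x * (1 + \<bar>c\<bar> * \<bar>Y x\<bar>) + Z x"
    proof -
      have t1: "\<bar>E x\<bar> \<le> \<bar>X x\<bar> + \<bar>c * X x * Y x\<bar> + \<bar>Z x\<bar>"
        unfolding E_def using abs_triangle_ineq[of "- X x - c * X x * Y x" "Z x"] abs_triangle_ineq4[of "- X x" "c * X x * Y x"]
        by simp
      have t2: "\<bar>c * X x * Y x\<bar> = X x * (\<bar>c\<bar> * \<bar>Y x\<bar>)" using pX[OF x] by (simp add: abs_mult)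
      show ?thesis using t1 t2 pX[OF x] pZ[OF x] by (simp add: algebra_simps)
    qed
    also have "\<dots> \<le> X x * (1 + \<bar>c\<bar> * B) + Z x"
      using pX[OF x] bY[OF x] by (intro add_right_mono mult_left_mono add_left_mono mult_left_mono) auto
    also have "\<dots> \<le> (KX * x powr \<mu>) * (1 + \<bar>c\<bar> * B) + KZ * x powr \<mu>"
    proof (intro add_mono mult_right_mono)
      show "X x \<le> KX * x powr \<mu>" using Xb[OF x] mult_left_mono[OF p1(1) KX0] by linarith
      show "Z x \<le> KZ * x powr \<mu>" using Zb[OF x] mult_left_mono[OF p1(2) KZ0] by linarith
    qed (use B0 in auto)
    also have "\<dots> = KE * x powr \<mu>" by (simp add: KE_def algebra_simps)
    finally show ?thesis .
  qed
  define a where "a = n2 / 2"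
  have a0: "a > 0" using n2 by (simp add: a_def)
  define \<nu> where "\<nu> = min a \<mu>"
  have \<nu>0: "\<nu> > 0" using a0 \<mu>0 by (simp add: \<nu>_def)
  define D where "D = KE^2 / (a * (2 * \<mu> - \<nu>))"
  have d2: "2 * \<mu> - \<nu> > 0" using \<mu>0 by (simp add: \<nu>_def)
  have D0: "D \<ge> 0" using a0 d2 by (simp add: D_def)
  have Dk: "2 * \<mu> * D - KE^2 / a = \<nu> * D" using a0 d2 by (simp add: D_def field_simps)
  define w where "w x = Y x + n2 / m" for x
  define h where "h x = (w x)^2 + D * x powr (2 * \<mu>)" for x
  define h' where "h' x = 2 * w x * Y' x + D * (2 * \<mu> * x powr (2 * \<mu>) / x)" for x
  have dh: "(h has_real_derivative h' x) (at x)" if x: "x \<in> {0<..b}" for x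
  proof -
    have "((\<lambda>x. (w x)^2) has_real_derivative 2 * w x * Y' x) (at x)"
      unfolding w_def using dY[OF x] by (auto intro!: derivative_eq_intros)
    thus ?thesis unfolding h_def h'_def using x
      by (intro DERIV_add DERIV_cmult xpowr_deriv) auto
  qed
  have hineq: "x * h' x \<ge> \<nu> * h x" if x: "x \<in> {0<..b}" for x
  proof -
    have x0: "x > 0" using x by simp
    have xY: "x * Y' x = (n2 - m * w x) * w x + E x"
    proof -
      have "(n2 - m * w x) * w x = - n2 * Y x - m * (Y x)^2"
        unfolding w_def using m by (simp add: field_simps power2_eq_square)
      thus ?thesis unfolding eY[OF x] E_def by simp
    qed
    have pw2: "(x powr \<mu>)^2 = x powr (2 * \<mu>)"
      using x0 by (simp add: power2_eq_square powr_add[symmetric])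
    have E2: "(E x)^2 \<le> KE^2 * x powr (2 * \<mu>)"
    proof -
      have "(E x)^2 = \<bar>E x\<bar>^2" by simp
      also have "\<dots> \<le> (KE * x powr \<mu>)^2" using Eb[OF x] by (intro power_mono) auto
      finally show ?thesis by (simp add: power_mult_distrib pw2)
    qed
    have c1: "2 * (n2 - m * w x) * (w x)^2 \<ge> 2 * a * (w x)^2"
    proof -
      have "n2 - m * w x \<ge> a" using bw[OF x] by (simp add: a_def w_def)
      hence "2 * a \<le> 2 * (n2 - m * w x)" by simp
      thus ?thesis by (intro mult_right_mono) simp_all
    qed
    have c2: "2 * w x * E x \<ge> - (a * (w x)^2 + (E x)^2 / a)"
    proof -
      have "a * (w x)^2 + 2 * w x * E x + (E x)^2 / a = (a * w x + E x)^2 / a"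
        using a0 by (simp add: field_simps power2_eq_square)
      also have "\<dots> \<ge> 0" using a0 by simp
      finally show ?thesis by linarith
    qed
    have c3: "(E x)^2 / a \<le> KE^2 * x powr (2 * \<mu>) / a" using E2 a0 by (simp add: divide_right_mono)
    have "x * h' x = 2 * w x * (x * Y' x) + 2 * \<mu> * D * x powr (2 * \<mu>)"
      unfolding h'_def using x0 by (simp add: field_simps)
    also have "\<dots> = 2 * (n2 - m * w x) * (w x)^2 + 2 * w x * E x + 2 * \<mu> * D * x powr (2 * \<mu>)"
      unfolding xY by (simp add: algebra_simps power2_eq_square)
    finally have "x * h' x \<ge> a * (w x)^2 + (2 * \<mu> * D - KE^2 / a) * x powr (2 * \<mu>)"
      using c1 c2 c3 by (simp add: algebra_simps)
    also have "(2 * \<mu> * D - KE^2 / a) = \<nu> * D" by (rule Dk)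
    finally have "x * h' x \<ge> a * (w x)^2 + \<nu> * D * x powr (2 * \<mu>)" by simp
    moreover have "a * (w x)^2 \<ge> \<nu> * (w x)^2" by (intro mult_right_mono) (auto simp: \<nu>_def)
    ultimately show ?thesis by (simp add: h_def algebra_simps)
  qed
  define KH where "KH = h b * b powr (-\<nu>)"
  have KH0: "KH \<ge> 0" using D0 by (simp add: KH_def h_def)
  have "\<bar>Y x + n2 / m\<bar> \<le> sqrt KH * x powr (\<nu> / 2)" if x: "x \<in> {0<..b}" for x
  proof -
    have "(w x)^2 \<le> h x" using D0 by (simp add: h_def)
    also have "\<dots> \<le> KH * x powr \<nu>" unfolding KH_def by (rule growth_bound[OF b(1) dh hineq x])
    finally have "sqrt ((w x)^2) \<le> sqrt (KH * x powr \<nu>)" by (rule real_sqrt_le_mono)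
    thus ?thesis using x by (simp add: w_def real_sqrt_mult powr_half_sqrt_powr)
  qed
  thus ?thesis using \<nu>0 by (intro exI[of _ "sqrt KH"] exI[of _ "\<nu> / 2"]) auto
qed


lemma profile_facts:
  fixes m \<sigma> p R :: real and N :: nat and f df g1 g2 :: "real \<Rightarrow> real"
  assumes hm: "m > 1" and h\<sigma>: "\<sigma> > 0" and hp: "p > m"
    and x: "x \<in> {0<..<R}"
    and P: "\<forall>\<xi> \<in> {0<..<R}. f \<xi> > 0 \<and>
      (f has_real_derivative df \<xi>) (at \<xi>) \<and>
      ((\<lambda>s. f s powr m) has_real_derivative g1 \<xi>) (at \<xi>) \<and>
      (g1 has_real_derivative g2 \<xi>) (at \<xi>) \<and>
      g2 \<xi> + (real N - 1) / \<xi> * g1 \<xi> + alpha_par m \<sigma> p * f \<xi>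
        + beta_par m \<sigma> p * \<xi> * df \<xi> - \<xi> powr \<sigma> * f \<xi> powr p = 0"
  defines "X \<equiv> \<lambda>\<xi>. alpha_par m \<sigma> p / m * \<xi>^2 * f \<xi> powr (1 - m)"
    and "Y \<equiv> \<lambda>\<xi>. \<xi> * g1 \<xi> / (m * f \<xi> powr m)"
    and "Z \<equiv> \<lambda>\<xi>. 1 / m * \<xi> powr (\<sigma> + 2) * f \<xi> powr (p - m)"
  shows "Y x = x * df x / f x" "deriv f x = df x"
    "(X has_real_derivative (2 + (1 - m) * Y x) * X x / x) (at x)"
    "(Z has_real_derivative (\<sigma> + 2 + (p - m) * Y x) * Z x / x) (at x)"
    "(Y has_real_derivative (- (real N - 2) * Y x - X x - (p - m) / (\<sigma> + 2) * X x * Y x + Z x - m * (Y x)^2) / x) (at x)"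
    "X x > 0" "Z x > 0"
proof -
  have x0: "x > 0" using x by simp
  have fx: "f x > 0" and df: "(f has_real_derivative df x) (at x)"
    and dg1: "((\<lambda>s. f s powr m) has_real_derivative g1 x) (at x)"
    and dg2: "(g1 has_real_derivative g2 x) (at x)"
    and eq: "g2 x + (real N - 1) / x * g1 x + alpha_par m \<sigma> p * f x
        + beta_par m \<sigma> p * x * df x - x powr \<sigma> * f x powr p = 0"
    using P x by blast+
  define F where "F = f x"
  define U where "U = f x powr m"
  have U0: "U > 0" using fx by (simp add: U_def)
  have "((\<lambda>s. f s powr m) has_real_derivative f x powr m * (0 * ln (f x) + df x * m / f x)) (at x)"
    by (rule DERIV_powr[OF df fx DERIV_const])
  hence g1e: "g1 x = m * U * df x / F" using DERIV_unique[OF dg1] by (simp add: U_def F_def)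
  show Ye: "Y x = x * df x / f x" unfolding Y_def g1e using U0 hm fx by (simp add: F_def U_def field_simps)
  show "deriv f x = df x" using df by (rule DERIV_imp_deriv)
  have L0: "L_par m \<sigma> p > 0" using hm h\<sigma> hp unfolding L_par_def by (smt (verit) mult_pos_pos)
  have al: "alpha_par m \<sigma> p > 0" using L0 h\<sigma> by (simp add: alpha_par_def)
  show "X x > 0" unfolding X_def using al hm x0 fx by simp
  show "Z x > 0" unfolding Z_def using hm x0 fx by simp
  show "(X has_real_derivative (2 + (1 - m) * Y x) * X x / x) (at x)"
    unfolding X_def Ye
    apply (rule DERIV_cong)
     apply (rule derivative_eq_intros df fx refl)+
    using x0 fx hm by (simp add: powr_diff powr_minus field_simps power2_eq_square)
  have e1: "x powr (\<sigma> + 2 - 1) = x powr (\<sigma> + 2) / x" using x0 powr_diff[of x "\<sigma>+2" 1] by simp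
  have e2: "f x powr (p - m - 1) = f x powr (p - m) / f x" using fx powr_diff[of "f x" "p-m" 1] by simp
  show "(Z has_real_derivative (\<sigma> + 2 + (p - m) * Y x) * Z x / x) (at x)"
    unfolding Z_def Ye
    apply (rule DERIV_cong)
     apply (rule derivative_eq_intros df fx x0 refl)+
    apply (simp only: e1 e2)
    using x0 fx hm by (simp add: field_simps)
  show "(Y has_real_derivative (- (real N - 2) * Y x - X x - (p - m) / (\<sigma> + 2) * X x * Y x + Z x - m * (Y x)^2) / x) (at x)"
  proof -
    have "(Y has_real_derivative ((1 * g1 x + g2 x * x) * (m * f x powr m) - x * g1 x * (m * g1 x)) / ((m * f x powr m) * (m * f x powr m))) (at x)"
      unfolding Y_def using U0 hm
      by (intro DERIV_divide DERIV_mult[OF DERIV_ident dg2] DERIV_cmult[OF dg1]) (auto simp: U_def)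
    hence "(Y has_real_derivative ((g1 x + x * g2 x) * (m * U) - x * g1 x * (m * g1 x)) / (m * U)^2) (at x)"
      by (simp add: U_def power2_eq_square algebra_simps)
    moreover have "((g1 x + x * g2 x) * (m * U) - x * g1 x * (m * g1 x)) / (m * U)^2 =
      (- (real N - 2) * Y x - X x - (p - m) / (\<sigma> + 2) * X x * Y x + Z x - m * (Y x)^2) / x"
    proof -
      define S where "S = x powr \<sigma>"
      define Pp where "Pp = f x powr p"
      define a where "a = alpha_par m \<sigma> p"
      define b where "b = beta_par m \<sigma> p"
      have g2e: "g2 x = - ((real N - 1) / x * g1 x) - a * F - b * x * df x + S * Pp"
        using eq unfolding S_def Pp_def a_def b_def F_def by linarith
      have Xe: "X x = a / m * x^2 * F / U"
        unfolding X_def using fx by (simp add: powr_diff a_def F_def U_def)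
      have Ze: "Z x = 1 / m * S * x^2 * Pp / U"
        unfolding Z_def using fx x0 by (simp add: powr_diff powr_add S_def Pp_def U_def power2_eq_square)
      have Ye': "Y x = x * df x / F" using Ye by (simp add: F_def)
      have ce: "(p - m) / (\<sigma> + 2) = b / a"
        using L0 h\<sigma> hp by (simp add: a_def b_def alpha_par_def beta_par_def)
      have F0: "F > 0" using fx by (simp add: F_def)
      have a0: "a > 0" using al by (simp add: a_def)
      show ?thesis unfolding Xe Ze Ye' ce g2e g1e
        using x0 F0 U0 a0 hm by (simp add: field_simps power2_eq_square)
    qed
    ultimately show ?thesis by simp
  qed
qed


lemma traj_lim:
  assumes "profile_traj_from m \<sigma> p f Q"
  shows "((\<lambda>\<xi>. xyz_of m \<sigma> p f \<xi> $ i) \<longlongrightarrow> Q $ i) (at_right 0)"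
proof -
  have "((\<lambda>\<xi>. xyz_of m \<sigma> p f (exp (ln \<xi>))) \<longlongrightarrow> Q) (at_right 0)"
    using filterlim_compose[OF assms[unfolded profile_traj_from_def] ln_at_0] by simp
  hence "((\<lambda>\<xi>. xyz_of m \<sigma> p f \<xi>) \<longlongrightarrow> Q) (at_right 0)"
    by (rule tendsto_cong[THEN iffD1, rotated])
       (auto simp: eventually_at_right_field intro!: exI[of _ 1])
  thus ?thesis by (rule tendsto_vec_nth)
qed

lemma xyz_comp: "xyz_of m \<sigma> p f \<xi> $ 1 = alpha_par m \<sigma> p / m * \<xi>^2 * f \<xi> powr (1 - m)"
  "xyz_of m \<sigma> p f \<xi> $ 2 = \<xi> * deriv f \<xi> / f \<xi>"
  "xyz_of m \<sigma> p f \<xi> $ 3 = 1 / m * \<xi> powr (\<sigma> + 2) * f \<xi> powr (p - m)"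
  by (simp_all add: xyz_of_def)

lemma asym_Q3:
  fixes m \<sigma> p R :: real and N :: nat
  assumes hm: "m > 1" and h\<sigma>: "\<sigma> > 0" and hp: "p > m" and Z0: "Z0 m N \<sigma> p > 0"
    and R: "R > 0" and prof: "is_profile m N \<sigma> p R f" and tr: "profile_traj_from m \<sigma> p f (Q3 m N \<sigma> p)"
  shows "\<exists>C > 0. ((\<lambda>\<xi>. f \<xi> / \<xi> powr (- (\<sigma> + 2) / (p - m))) \<longlongrightarrow> C) (at_right 0)"
proof -
  obtain df g1 g2 where P: "\<forall>\<xi> \<in> {0<..<R}. f \<xi> > 0 \<and>
      (f has_real_derivative df \<xi>) (at \<xi>) \<and>
      ((\<lambda>s. f s powr m) has_real_derivative g1 \<xi>) (at \<xi>) \<and>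
      (g1 has_real_derivative g2 \<xi>) (at \<xi>) \<and>
      g2 \<xi> + (real N - 1) / \<xi> * g1 \<xi> + alpha_par m \<sigma> p * f \<xi>
        + beta_par m \<sigma> p * \<xi> * df \<xi> - \<xi> powr \<sigma> * f \<xi> powr p = 0"
    using prof unfolding is_profile_def by blast
  define Z where "Z \<xi> = 1 / m * \<xi> powr (\<sigma> + 2) * f \<xi> powr (p - m)" for \<xi>
  have lZ: "(Z \<longlongrightarrow> Z0 m N \<sigma> p) (at_right 0)"
    using traj_lim[OF tr, of 3] unfolding xyz_comp Z_def[abs_def] by (simp add: Q3_def)
  have pm: "p - m > 0" using hp by simp
  have "((\<lambda>\<xi>. (m * Z \<xi>) powr (1 / (p - m))) \<longlongrightarrow> (m * Z0 m N \<sigma> p) powr (1 / (p - m))) (at_right 0)"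
    using Z0 hm by (intro tendsto_powr tendsto_mult tendsto_const lZ) auto
  moreover have "eventually (\<lambda>\<xi>. (m * Z \<xi>) powr (1 / (p - m)) = f \<xi> / \<xi> powr (- (\<sigma> + 2) / (p - m))) (at_right 0)"
  proof (rule eventually_at_rightI[of 0 R])
    fix \<xi> :: real assume x: "\<xi> \<in> {0<..<R}"
    have fx: "f \<xi> > 0" using P x by blast
    have x0: "\<xi> > 0" using x by simp
    have "(m * Z \<xi>) powr (1 / (p - m)) = (\<xi> powr (\<sigma> + 2) * f \<xi> powr (p - m)) powr (1 / (p - m))"
      using hm by (simp add: Z_def)
    also have "\<dots> = \<xi> powr ((\<sigma> + 2) / (p - m)) * f \<xi>"
      using x0 fx pm by (simp add: powr_mult powr_powr)
    also have "\<dots> = f \<xi> / \<xi> powr (- (\<sigma> + 2) / (p - m))"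
    proof -
      have e: "- (\<sigma> + 2) / (p - m) = - ((\<sigma> + 2) / (p - m))" by (rule minus_divide_left[symmetric])
      show ?thesis unfolding e powr_minus by (simp add: divide_inverse mult.commute)
    qed
    finally show "(m * Z \<xi>) powr (1 / (p - m)) = f \<xi> / \<xi> powr (- (\<sigma> + 2) / (p - m))" .
  qed (use R in auto)
  ultimately have "((\<lambda>\<xi>. f \<xi> / \<xi> powr (- (\<sigma> + 2) / (p - m))) \<longlongrightarrow> (m * Z0 m N \<sigma> p) powr (1 / (p - m))) (at_right 0)"
    by (rule tendsto_cong[THEN iffD1, rotated])
  moreover have "(m * Z0 m N \<sigma> p) powr (1 / (p - m)) > 0" using Z0 hm by simp
  ultimately show ?thesis by blast
qed

lemma asym_Q2:
  fixes m \<sigma> p R :: real and N :: nat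
  assumes hm: "m > 1" and h\<sigma>: "\<sigma> > 0" and hp: "p > m" and hN: "N \<ge> 3"
    and hpc: "p \<noteq> m * (real N + \<sigma>) / (real N - 2)"
    and R: "R > 0" and prof: "is_profile m N \<sigma> p R f" and tr: "profile_traj_from m \<sigma> p f (Q2 m N)"
  shows "\<exists>C > 0. ((\<lambda>\<xi>. f \<xi> / \<xi> powr (- (real N - 2) / m)) \<longlongrightarrow> C) (at_right 0)"
proof -
  obtain df g1 g2 where P: "\<forall>\<xi> \<in> {0<..<R}. f \<xi> > 0 \<and>
      (f has_real_derivative df \<xi>) (at \<xi>) \<and>
      ((\<lambda>s. f s powr m) has_real_derivative g1 \<xi>) (at \<xi>) \<and>
      (g1 has_real_derivative g2 \<xi>) (at \<xi>) \<and>
      g2 \<xi> + (real N - 1) / \<xi> * g1 \<xi> + alpha_par m \<sigma> p * f \<xi>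
        + beta_par m \<sigma> p * \<xi> * df \<xi> - \<xi> powr \<sigma> * f \<xi> powr p = 0"
    using prof unfolding is_profile_def by blast
  define X where "X \<equiv> \<lambda>\<xi>. alpha_par m \<sigma> p / m * \<xi>^2 * f \<xi> powr (1 - m)"
  define Y where "Y \<equiv> \<lambda>\<xi>. \<xi> * g1 \<xi> / (m * f \<xi> powr m)"
  define Z where "Z \<equiv> \<lambda>\<xi>. 1 / m * \<xi> powr (\<sigma> + 2) * f \<xi> powr (p - m)"
  note PF = profile_facts[OF hm h\<sigma> hp _ P, folded X_def Y_def Z_def]
  define n2 where "n2 = real N - 2"
  have n2: "n2 > 0" using hN by (simp add: n2_def)
  define y0 where "y0 = - n2 / m"
  have lZ: "(Z \<longlongrightarrow> 0) (at_right 0)"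
    using traj_lim[OF tr, of 3] unfolding xyz_comp Z_def by (simp add: Q2_def)
  have lY: "(Y \<longlongrightarrow> y0) (at_right 0)"
  proof -
    have "((\<lambda>\<xi>. xyz_of m \<sigma> p f \<xi> $ 2) \<longlongrightarrow> y0) (at_right 0)"
      using traj_lim[OF tr, of 2] by (simp add: Q2_def y0_def n2_def)
    moreover have "eventually (\<lambda>\<xi>. xyz_of m \<sigma> p f \<xi> $ 2 = Y \<xi>) (at_right 0)"
      by (rule eventually_at_rightI[of 0 R]) (use R PF(1,2) in \<open>auto simp: xyz_comp Y_def\<close>)
    ultimately show ?thesis by (rule tendsto_cong[THEN iffD1, rotated])
  qed
  define l1 where "l1 = 2 + (1 - m) * y0"
  define l3 where "l3 = \<sigma> + 2 + (p - m) * y0"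
  have l1: "l1 > 0"
  proof -
    have "1 * n2 < m * n2" using mult_strict_right_mono[OF hm n2] .
    hence "n2 < m * n2 + m * 2" using hm by linarith
    thus ?thesis using hm n2 by (simp add: l1_def y0_def field_simps)
  qed
  have l3e: "l3 = (m * (real N + \<sigma>) - p * (real N - 2)) / m"
    using hm by (simp add: l3_def y0_def n2_def field_simps)
  have l3ne: "l3 \<noteq> 0"
  proof
    assume "l3 = 0"
    hence "p * (real N - 2) = m * (real N + \<sigma>)" using hm l3e by simp
    hence "p = m * (real N + \<sigma>) / (real N - 2)" using n2 by (simp add: n2_def field_simps)
    thus False using hpc by simp
  qed
  have lc3: "((\<lambda>\<xi>. \<sigma> + 2 + (p - m) * Y \<xi>) \<longlongrightarrow> l3) (at_right 0)"
    unfolding l3_def by (intro tendsto_intros lY)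
  show ?thesis
  proof (cases "l3 < 0")
    case True
    have "eventually (\<lambda>\<xi>. \<sigma> + 2 + (p - m) * Y \<xi> < 0) (at_right 0)"
      using order_tendstoD(2)[OF lc3 True] .
    then obtain b0 where b0: "b0 > 0" "\<And>\<xi>. 0 < \<xi> \<Longrightarrow> \<xi> < b0 \<Longrightarrow> \<sigma> + 2 + (p - m) * Y \<xi> < 0"
      unfolding eventually_at_right_field by auto
    define b where "b = min (b0 / 2) (R / 2)"
    have b: "b > 0" "b < b0" "b < R" using b0 R by (auto simp: b_def)
    have "Z b \<le> Z \<xi>" if "\<xi> \<in> {0<..b}" for \<xi>
    proof (rule decr_bound[of b Z "\<lambda>x. (\<sigma> + 2 + (p - m) * Y x) * Z x / x"])
      fix x assume x: "x \<in> {0<..b}"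
      hence xR: "x \<in> {0<..<R}" using b by auto
      show "(Z has_real_derivative (\<sigma> + 2 + (p - m) * Y x) * Z x / x) (at x)" using PF(4)[OF xR] by (simp add: Z_def Y_def)
      have "(\<sigma> + 2 + (p - m) * Y x) * Z x \<le> 0"
        using b0(2)[of x] x b PF(7)[OF xR] by (intro mult_nonpos_nonneg) (auto simp: Z_def)
      thus "(\<sigma> + 2 + (p - m) * Y x) * Z x / x \<le> 0" using x by (simp add: divide_nonpos_pos)
    qed (use that in auto)
    hence zb: "\<And>\<xi>. 0 < \<xi> \<Longrightarrow> \<xi> < b \<Longrightarrow> Z b \<le> Z \<xi>" by simp
    have "eventually (\<lambda>\<xi>. Z b \<le> Z \<xi>) (at_right 0)"
      unfolding eventually_at_right_field using b(1) zb by blast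
    hence "Z b \<le> 0" by (rule tendsto_lowerbound[OF lZ]) simp
    moreover have "Z b > 0" using PF(7)[of b] b by (auto simp: Z_def)
    ultimately show ?thesis by simp
  next
    case False
    hence l3p: "l3 > 0" using l3ne by simp
    have lc1: "((\<lambda>\<xi>. 2 + (1 - m) * Y \<xi>) \<longlongrightarrow> l1) (at_right 0)"
      unfolding l1_def by (intro tendsto_intros lY)
    define \<epsilon> where "\<epsilon> = n2 / (2 * m)"
    have \<epsilon>: "\<epsilon> > 0" using n2 hm by (simp add: \<epsilon>_def)
    have ev: "eventually (\<lambda>\<xi>. (2 + (1 - m) * Y \<xi> > l1 / 2 \<and> \<sigma> + 2 + (p - m) * Y \<xi> > l3 / 2)
       \<and> (Y \<xi> > y0 - \<epsilon> \<and> Y \<xi> < y0 + \<epsilon>)) (at_right 0)"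
      using order_tendstoD(1)[OF lc1, of "l1/2"] order_tendstoD(1)[OF lc3, of "l3/2"]
        order_tendstoD(1)[OF lY, of "y0 - \<epsilon>"] order_tendstoD(2)[OF lY, of "y0 + \<epsilon>"] l1 l3p \<epsilon>
      by (intro eventually_conj) auto
    then obtain b0 where b0: "b0 > 0" and b0P: "\<And>\<xi>. 0 < \<xi> \<Longrightarrow> \<xi> < b0 \<Longrightarrow>
        (2 + (1 - m) * Y \<xi> > l1 / 2 \<and> \<sigma> + 2 + (p - m) * Y \<xi> > l3 / 2) \<and> (Y \<xi> > y0 - \<epsilon> \<and> Y \<xi> < y0 + \<epsilon>)"
      unfolding eventually_at_right_field by auto
    define b where "b = min (b0 / 2) (min (R / 2) 1)"
    have b: "b > 0" "b < b0" "b < R" "b \<le> 1" using b0 R by (auto simp: b_def)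
    have xR: "x \<in> {0<..<R}" if "x \<in> {0<..b}" for x using that b by auto
    have xP: "(2 + (1 - m) * Y x > l1 / 2 \<and> \<sigma> + 2 + (p - m) * Y x > l3 / 2) \<and> (Y x > y0 - \<epsilon> \<and> Y x < y0 + \<epsilon>)"
      if "x \<in> {0<..b}" for x using b0P[of x] that b by auto
    have m0: "m > 0" using hm by simp
    have "\<exists>K \<delta>. \<delta> > 0 \<and> (\<forall>x\<in>{0<..b}. \<bar>Y x + n2 / m\<bar> \<le> K * x powr \<delta>)"
    proof (rule core[of b n2 m "l1/2" "l3/2" X "\<lambda>x. (2 + (1 - m) * Y x) * X x / x" Y Z
          "\<lambda>x. (\<sigma> + 2 + (p - m) * Y x) * Z x / x" \<sigma> p
          "\<lambda>x. (- (real N - 2) * Y x - X x - (p - m) / (\<sigma> + 2) * X x * Y x + Z x - m * (Y x)^2) / x"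
          "(p - m) / (\<sigma> + 2)" "\<bar>y0\<bar> + \<epsilon>"])
      show "0 < b" "b \<le> 1" "0 < n2" "0 < m" "0 < l1 / 2" "0 < l3 / 2" using b n2 m0 l1 l3p by auto
    next
      fix x assume x: "x \<in> {0<..b}"
      have x0: "x > 0" using x by simp
      note R' = xR[OF x]
      show "(X has_real_derivative (2 + (1 - m) * Y x) * X x / x) (at x)"
        using PF(3)[OF R'] by (simp add: X_def Y_def)
      show "x * ((2 + (1 - m) * Y x) * X x / x) = (2 + (1 - m) * Y x) * X x" using x0 by simp
      show "0 < X x" using PF(6)[OF R'] by (simp add: X_def)
      show "(Z has_real_derivative (\<sigma> + 2 + (p - m) * Y x) * Z x / x) (at x)"
        using PF(4)[OF R'] by (simp add: Z_def Y_def)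
      show "x * ((\<sigma> + 2 + (p - m) * Y x) * Z x / x) = (\<sigma> + 2 + (p - m) * Y x) * Z x" using x0 by simp
      show "0 < Z x" using PF(7)[OF R'] by (simp add: Z_def)
      show "(Y has_real_derivative (- (real N - 2) * Y x - X x - (p - m) / (\<sigma> + 2) * X x * Y x + Z x - m * (Y x)^2) / x) (at x)"
        using PF(5)[OF R'] by (simp add: X_def Y_def Z_def)
      show "x * ((- (real N - 2) * Y x - X x - (p - m) / (\<sigma> + 2) * X x * Y x + Z x - m * (Y x)^2) / x) =
         - n2 * Y x - X x - (p - m) / (\<sigma> + 2) * X x * Y x + Z x - m * (Y x)^2"
        using x0 by (simp add: n2_def)
      show "l1 / 2 \<le> 2 + (1 - m) * Y x" "l3 / 2 \<le> \<sigma> + 2 + (p - m) * Y x" using xP[OF x] by auto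
      show "\<bar>Y x\<bar> \<le> \<bar>y0\<bar> + \<epsilon>" using xP[OF x] by auto
      have "Y x < - n2 / (2 * m)" using xP[OF x] m0 by (simp add: y0_def \<epsilon>_def field_simps)
      hence "m * Y x < m * (- n2 / (2 * m))" using m0 by (rule mult_strict_left_mono)
      also have "m * (- n2 / (2 * m)) = - n2 / 2" using m0 by simp
      finally have "m * Y x < - n2 / 2" .
      thus "n2 / 2 \<le> n2 - m * (Y x + n2 / m)" using m0 by (simp add: field_simps)
    qed
    then obtain K \<delta> where \<delta>: "\<delta> > 0" and Kb: "\<And>x. x \<in> {0<..b} \<Longrightarrow> \<bar>Y x + n2 / m\<bar> \<le> K * x powr \<delta>" by blast
    define \<phi> where "\<phi> x = ln (f x) + n2 / m * ln x" for x
    have "\<exists>L. (\<phi> \<longlongrightarrow> L) (at_right 0)"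
    proof (rule log_lim[OF b(1) \<delta>, of \<phi> "\<lambda>x. df x / f x + n2 / m * (1 / x)" K])
      fix x assume x: "x \<in> {0<..b}"
      note R' = xR[OF x]
      have fx: "f x > 0" and dfx: "(f has_real_derivative df x) (at x)" using P R' by blast+
      have x0: "x > 0" using x by simp
      show "(\<phi> has_real_derivative df x / f x + n2 / m * (1 / x)) (at x)"
        unfolding \<phi>_def
        apply (rule DERIV_cong)
         apply (rule derivative_eq_intros dfx fx x0 refl)+
        using fx x0 by simp
      have "x * (df x / f x + n2 / m * (1 / x)) = Y x + n2 / m"
        using PF(1)[OF R'] x0 by (simp add: Y_def field_simps)
      thus "\<bar>x * (df x / f x + n2 / m * (1 / x))\<bar> \<le> K * x powr \<delta>" using Kb[OF x] by simp
    qed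
    then obtain L where L: "(\<phi> \<longlongrightarrow> L) (at_right 0)" by blast
    have "((\<lambda>x. exp (\<phi> x)) \<longlongrightarrow> exp L) (at_right 0)" by (intro tendsto_intros L)
    moreover have "eventually (\<lambda>\<xi>. exp (\<phi> \<xi>) = f \<xi> / \<xi> powr (- (real N - 2) / m)) (at_right 0)"
    proof (rule eventually_at_rightI[of 0 R])
      fix \<xi> :: real assume x: "\<xi> \<in> {0<..<R}"
      have fx: "f \<xi> > 0" using P x by blast
      have x0: "\<xi> > 0" using x by simp
      have e: "- (real N - 2) / m = - (n2 / m)" unfolding n2_def by (rule minus_divide_left[symmetric])
      show "exp (\<phi> \<xi>) = f \<xi> / \<xi> powr (- (real N - 2) / m)"
        unfolding e powr_minus \<phi>_def using fx x0
        by (simp add: exp_add powr_def divide_inverse mult.commute)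
    qed (use R in auto)
    ultimately have "((\<lambda>\<xi>. f \<xi> / \<xi> powr (- (real N - 2) / m)) \<longlongrightarrow> exp L) (at_right 0)"
      by (rule tendsto_cong[THEN iffD1, rotated])
    thus ?thesis by (intro exI[of _ "exp L"]) auto
  qed
qed


lemma pos_ev: "(\<forall>x\<in>S. x > 0) \<Longrightarrow> \<forall>c\<in>complex_of_real ` S. Im c = 0 \<and> 0 < Re c" by auto
lemma nz_ev: "(\<forall>x\<in>S. x \<noteq> 0) \<Longrightarrow> \<forall>c\<in>complex_of_real ` S. Re c \<noteq> 0" by auto

theorem lemma2p5:
  fixes m \<sigma> p :: real and N :: nat
  assumes hm: "m > 1" and h\<sigma>: "\<sigma> > 0" and hp: "p > m" and hN: "N \<ge> 3"
  shows
    "(p < m * (real N + \<sigma>) / (real N - 2) \<longrightarrow>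
        unstable_node (S2 m N \<sigma> p) (Q2 m N))
   \<and> (p > m * (real N + \<sigma>) / (real N - 2) \<longrightarrow>
        saddle_point (S2 m N \<sigma> p) (Q2 m N)
      \<and> unstable_manifold_dim (S2 m N \<sigma> p) (Q2 m N) 2
      \<and> stable_manifold_dim (S2 m N \<sigma> p) (Q2 m N) 1
      \<and> unstable_manifold (S2 m N \<sigma> p) (Q2 m N) \<subseteq> {v. v$3 = 0}
      \<and> stable_manifold (S2 m N \<sigma> p) (Q2 m N) \<subseteq> {v. v$1 = 0})
   \<and> (p < m * (real N + \<sigma>) / (real N - 2) \<longrightarrow>
        saddle_point (S2 m N \<sigma> p) (Q3 m N \<sigma> p)
      \<and> unstable_manifold_dim (S2 m N \<sigma> p) (Q3 m N \<sigma> p) 2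
      \<and> stable_manifold_dim (S2 m N \<sigma> p) (Q3 m N \<sigma> p) 1
      \<and> stable_manifold (S2 m N \<sigma> p) (Q3 m N \<sigma> p) \<subseteq> {v. v$1 = 0})
   \<and> (p \<noteq> m * (real N + \<sigma>) / (real N - 2) \<longrightarrow>
        (\<forall>R f. R > 0 \<and> is_profile m N \<sigma> p R f \<and> profile_traj_from m \<sigma> p f (Q2 m N) \<longrightarrow>
           (\<exists>C > 0. ((\<lambda>\<xi>. f \<xi> / \<xi> powr (- (real N - 2) / m)) \<longlongrightarrow> C) (at_right 0))))
   \<and> (p < m * (real N + \<sigma>) / (real N - 2) \<longrightarrow>
        (\<forall>R f. R > 0 \<and> is_profile m N \<sigma> p R f \<and> profile_traj_from m \<sigma> p f (Q3 m N \<sigma> p) \<longrightarrow>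
           (\<exists>C > 0. ((\<lambda>\<xi>. f \<xi> / \<xi> powr (- (\<sigma> + 2) / (p - m))) \<longlongrightarrow> C) (at_right 0))))"
proof -
  note F2 = Q2_facts[OF hm h\<sigma> hp hN]
  let ?M2 = "J2 m N \<sigma> p (Q2 m N)"
  let ?l1 = "2 + (m-1)*(real N-2)/m"
  let ?l3 = "(m * (real N + \<sigma>) - p * (real N - 2)) / m"
  have J2: "jacobian_is (S2 m N \<sigma> p) (Q2 m N) ?M2" by (rule S2_jac)
  note C2 = cp3[OF F2(2)]
  have q2: "Q2 m N $ 1 = 0" "Q2 m N $ 2 = - (real N - 2) / m" "Q2 m N $ 3 = 0" by (simp_all add: Q2_def)
  have l1p: "?l1 > 0" by (rule F2(3))
  have n2p: "real N - 2 > 0" by (rule F2(4))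
  have A: "p < m * (real N + \<sigma>) / (real N - 2) \<longrightarrow> unstable_node (S2 m N \<sigma> p) (Q2 m N)"
  proof
    assume h: "p < m * (real N + \<sigma>) / (real N - 2)"
    hence l3: "?l3 > 0" using F2(5) by simp
    show "unstable_node (S2 m N \<sigma> p) (Q2 m N)"
    proof -
      have ev: "\<forall>c\<in>eigenvalues ?M2. Im c = 0 \<and> 0 < Re c"
        unfolding C2(1) by (rule pos_ev) (use l1p n2p l3 in auto)
      show ?thesis unfolding unstable_node_def unstable_node_matrix_def using F2(1) J2 ev by blast
    qed
  qed
  have B: "p > m * (real N + \<sigma>) / (real N - 2) \<longrightarrow>
        saddle_point (S2 m N \<sigma> p) (Q2 m N)
      \<and> unstable_manifold_dim (S2 m N \<sigma> p) (Q2 m N) 2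
      \<and> stable_manifold_dim (S2 m N \<sigma> p) (Q2 m N) 1
      \<and> unstable_manifold (S2 m N \<sigma> p) (Q2 m N) \<subseteq> {v. v$3 = 0}
      \<and> stable_manifold (S2 m N \<sigma> p) (Q2 m N) \<subseteq> {v. v$1 = 0}"
  proof
    assume h: "p > m * (real N + \<sigma>) / (real N - 2)"
    hence l3: "?l3 < 0" using F2(6) by simp
    have ud: "unstable_dim ?M2 = 2" using C2(2) l1p n2p l3 by simp
    have sd: "stable_dim ?M2 = 1" using C2(3) l1p n2p l3 by simp
    have hy: "hyperbolic ?M2" unfolding hyperbolic_def C2(1) by (rule nz_ev) (use l1p n2p l3 in auto)
    have "\<sigma> + 2 + (p - m) * Q2 m N $ 2 = ?l3" using hm unfolding q2 by (simp add: field_simps)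
    hence u: "\<sigma> + 2 + (p - m) * Q2 m N $ 2 < 0" using l3 by simp
    have "2 - (m - 1) * Q2 m N $ 2 = ?l1" using hm unfolding q2 by (simp add: field_simps)
    hence s: "2 - (m - 1) * Q2 m N $ 2 > 0" using l1p by simp
    show "saddle_point (S2 m N \<sigma> p) (Q2 m N)
      \<and> unstable_manifold_dim (S2 m N \<sigma> p) (Q2 m N) 2
      \<and> stable_manifold_dim (S2 m N \<sigma> p) (Q2 m N) 1
      \<and> unstable_manifold (S2 m N \<sigma> p) (Q2 m N) \<subseteq> {v. v$3 = 0}
      \<and> stable_manifold (S2 m N \<sigma> p) (Q2 m N) \<subseteq> {v. v$1 = 0}"
      unfolding saddle_point_def saddle_matrix_def unstable_manifold_dim_def stable_manifold_dim_def
      using F2(1) J2 ud sd hy unstable_z0[OF q2(3) u] stable_x0[OF q2(1) s] by auto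
  qed
  have C: "p < m * (real N + \<sigma>) / (real N - 2) \<longrightarrow>
        saddle_point (S2 m N \<sigma> p) (Q3 m N \<sigma> p)
      \<and> unstable_manifold_dim (S2 m N \<sigma> p) (Q3 m N \<sigma> p) 2
      \<and> stable_manifold_dim (S2 m N \<sigma> p) (Q3 m N \<sigma> p) 1
      \<and> stable_manifold (S2 m N \<sigma> p) (Q3 m N \<sigma> p) \<subseteq> {v. v$1 = 0}"
  proof
    assume h: "p < m * (real N + \<sigma>) / (real N - 2)"
    note F3 = Q3_facts[OF hm h\<sigma> hp hN h]
    note C3 = cp3[OF F3(2)]
    have J3: "jacobian_is (S2 m N \<sigma> p) (Q3 m N \<sigma> p) (J2 m N \<sigma> p (Q3 m N \<sigma> p))" by (rule S2_jac)
    have ud: "unstable_dim (J2 m N \<sigma> p (Q3 m N \<sigma> p)) = 2" using C3(2) F3(3-5) by simp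
    have sd: "stable_dim (J2 m N \<sigma> p (Q3 m N \<sigma> p)) = 1" using C3(3) F3(3-5) by simp
    have hy: "hyperbolic (J2 m N \<sigma> p (Q3 m N \<sigma> p))" unfolding hyperbolic_def C3(1) by (rule nz_ev) (use F3(3-5) in auto)
    have q3: "Q3 m N \<sigma> p $ 1 = 0" "Q3 m N \<sigma> p $ 2 = - (\<sigma> + 2) / (p - m)" by (simp_all add: Q3_def)
    have "2 - (m - 1) * Q3 m N \<sigma> p $ 2 = 2 + (m-1)*(\<sigma>+2)/(p-m)" using hp unfolding q3 by (simp add: field_simps)
    hence s: "2 - (m - 1) * Q3 m N \<sigma> p $ 2 > 0" using F3(3) by simp
    show "saddle_point (S2 m N \<sigma> p) (Q3 m N \<sigma> p)
      \<and> unstable_manifold_dim (S2 m N \<sigma> p) (Q3 m N \<sigma> p) 2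
      \<and> stable_manifold_dim (S2 m N \<sigma> p) (Q3 m N \<sigma> p) 1
      \<and> stable_manifold (S2 m N \<sigma> p) (Q3 m N \<sigma> p) \<subseteq> {v. v$1 = 0}"
      unfolding saddle_point_def saddle_matrix_def unstable_manifold_dim_def stable_manifold_dim_def
      using F3(1) J3 ud sd hy stable_x0[OF q3(1) s] by auto
  qed
  have D: "p \<noteq> m * (real N + \<sigma>) / (real N - 2) \<longrightarrow>
        (\<forall>R f. R > 0 \<and> is_profile m N \<sigma> p R f \<and> profile_traj_from m \<sigma> p f (Q2 m N) \<longrightarrow>
           (\<exists>C > 0. ((\<lambda>\<xi>. f \<xi> / \<xi> powr (- (real N - 2) / m)) \<longlongrightarrow> C) (at_right 0)))"
    using asym_Q2[OF hm h\<sigma> hp hN] by blast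
  have E: "p < m * (real N + \<sigma>) / (real N - 2) \<longrightarrow>
        (\<forall>R f. R > 0 \<and> is_profile m N \<sigma> p R f \<and> profile_traj_from m \<sigma> p f (Q3 m N \<sigma> p) \<longrightarrow>
           (\<exists>C > 0. ((\<lambda>\<xi>. f \<xi> / \<xi> powr (- (\<sigma> + 2) / (p - m))) \<longlongrightarrow> C) (at_right 0)))"
  proof (intro impI allI)
    fix R f assume h: "p < m * (real N + \<sigma>) / (real N - 2)"
      and H: "R > 0 \<and> is_profile m N \<sigma> p R f \<and> profile_traj_from m \<sigma> p f (Q3 m N \<sigma> p)"
    note F3 = Q3_facts[OF hm h\<sigma> hp hN h]
    show "\<exists>C > 0. ((\<lambda>\<xi>. f \<xi> / \<xi> powr (- (\<sigma> + 2) / (p - m))) \<longlongrightarrow> C) (at_right 0)"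
      using asym_Q3[OF hm h\<sigma> hp F3(6)] H by blast
  qed
  show ?thesis using A B C D E by blast
qed

end
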